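(* Let $b\ge2$, $d\ge1$ be integers, $\ell\in\mathbb{N}_0$ and $0<\epsilon<b^{-\ell}$. For every $L\in\mathbb{N}$ there exists $q_d\in\mathcal{NN}_{d,1}(2d\,b^{\lceil\ell/L\rceil},L)$ such that for every ${\bf i}\in I_\ell$, \[ q_d(x)=\mathrm{ind}({\bf i}):=\sum_{j=1}^d b^{\ell(j-1)}{\bf i}_j\qquad\text{for all } x\in\Omega^\ell_{{\bf i},\epsilon}. \]
   Context: $\mathcal{NN}_{d,k}(W,L)$: set of maps $g:\mathbb{R}^d\to\mathbb{R}^k$ given by $g_0(x)=x$, $g_{\ell+1}(x)=\sigma(A_\ell g_\ell(x)+b_\ell)$ ($\ell=0,\dots,L-1$), $g(x)=A_Lg_L(x)+b_L$, with $A_\ell\in\mathbb{R}^{N_{\ell+1}\times N_\ell}$, $b_\ell\in\mathbb{R}^{N_{\ell+1}}$, $N_0=d$, $N_{L+1}=k$, $\max\{N_1,\dots,N_L\}\le W$, $\sigma(t)=\max\{t,0\}$ componentwise. Partition with base $b$: for $\ell\in\mathbb{N}_0$, $I_\ell=\{0,\dots,b^\ell-1\}^d$. For ${\bf i}\in I_\ell$ and $\epsilon>0$, $\Omega^\ell_{{\bf i},\epsilon}=\prod_{j=1}^dJ_j$ where $J_j=[b^{-\ell}{\bf i}_j,\,b^{-\ell}({\bf i}_j+1)-\epsilon)$ if ${\bf i}_j<b^\ell-1$ and $J_j=[1-b^{-\ell},1)$ if ${\bf i}_j=b^\ell-1$. *)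

theory Defs
  imports Complex_Main
begin

text \<open>Vectors in R^n are represented as functions nat => real, only the coordinates
  0..n-1 being relevant. A network of depth L is given by widths N 0,...,N (L+1),
  weight matrices A l (N (l+1) x N l) and biases bb l.\<close>

definition relu :: "real \<Rightarrow> real" where
  "relu t = max t 0"

fun nn_hidden :: "(nat \<Rightarrow> nat) \<Rightarrow> (nat \<Rightarrow> nat \<Rightarrow> nat \<Rightarrow> real) \<Rightarrow> (nat \<Rightarrow> nat \<Rightarrow> real)
    \<Rightarrow> nat \<Rightarrow> (nat \<Rightarrow> real) \<Rightarrow> (nat \<Rightarrow> real)" where
  "nn_hidden N A bb 0 x = x"
| "nn_hidden N A bb (Suc l) x =
     (\<lambda>i. relu (bb l i + (\<Sum>j<N l. A l i j * nn_hidden N A bb l x j)))"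

definition nn_eval :: "(nat \<Rightarrow> nat) \<Rightarrow> (nat \<Rightarrow> nat \<Rightarrow> nat \<Rightarrow> real) \<Rightarrow> (nat \<Rightarrow> nat \<Rightarrow> real)
    \<Rightarrow> nat \<Rightarrow> (nat \<Rightarrow> real) \<Rightarrow> (nat \<Rightarrow> real)" where
  "nn_eval N A bb L x = (\<lambda>i. bb L i + (\<Sum>j<N L. A L i j * nn_hidden N A bb L x j))"

definition is_NN :: "nat \<Rightarrow> nat \<Rightarrow> nat \<Rightarrow> nat \<Rightarrow> ((nat \<Rightarrow> real) \<Rightarrow> (nat \<Rightarrow> real)) \<Rightarrow> bool" where
  "is_NN d k W L g \<longleftrightarrow>
     (\<exists>N A bb. N 0 = d \<and> N (Suc L) = k \<and> (\<forall>l\<in>{1..L}. N l \<le> W) \<and>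
        (\<forall>x. \<forall>i<k. g x i = nn_eval N A bb L x i))"

text \<open>Multi-indices i in I_l (0-based coordinates j < d).\<close>
definition index_set :: "nat \<Rightarrow> nat \<Rightarrow> nat \<Rightarrow> (nat \<Rightarrow> nat) set" where
  "index_set b d l = {i. \<forall>j<d. i j < b ^ l}"

definition Omega :: "nat \<Rightarrow> nat \<Rightarrow> nat \<Rightarrow> (nat \<Rightarrow> nat) \<Rightarrow> real \<Rightarrow> (nat \<Rightarrow> real) set" where
  "Omega b d l i eps = {x. \<forall>j<d. x j \<in>
     (if i j < b ^ l - 1
      then {real (i j) / real b ^ l ..< real (i j + 1) / real b ^ l - eps}
      else {1 - 1 / real b ^ l ..< 1})}"

definition ind :: "nat \<Rightarrow> nat \<Rightarrow> nat \<Rightarrow> (nat \<Rightarrow> nat) \<Rightarrow> real" where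
  "ind b d l i = (\<Sum>j<d. real b ^ (l * j) * real (i j))"

end

theory Submission
  imports Defs
begin


lemma sum_blocks:
  fixes f :: "nat \<Rightarrow> real"
  shows "(\<Sum>p<d*M. f p) = (\<Sum>q<d. \<Sum>r<M. f (q*M + r))"
proof -
  have "(\<Sum>p<d*M. f p) = (\<Sum>q<d. sum f {q*M..<q*M+M})"
    using sum.nat_group[of f M d] by simp
  also have "\<dots> = (\<Sum>q<d. \<Sum>r<M. f (q*M + r))"
  proof (rule sum.cong[OF refl])
    fix q
    have "{q*M..<q*M+M} = (\<lambda>r. q*M+r) ` {..<M}"
      proof (rule set_eqI, rule iffI)
      fix p assume "p \<in> {q*M..<q*M+M}"
      then have "p = q*M + (p - q*M)" "p - q*M < M" by auto
      then show "p \<in> (\<lambda>r. q*M+r) ` {..<M}" by blast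
    qed auto
    then show "sum f {q*M..<q*M+M} = (\<Sum>r<M. f (q*M + r))"
      by (simp add: sum.reindex)
  qed
  finally show ?thesis .
qed

lemma sum_block_sel:
  fixes h :: "nat \<Rightarrow> real" and c :: "nat \<Rightarrow> real"
  assumes "q0 < d" "0 < M"
  shows "(\<Sum>p<d*M. (if p div M = q0 then c (p mod M) else 0) * h p) = (\<Sum>r<M. c r * h (q0*M + r))"
proof -
  have "(\<Sum>p<d*M. (if p div M = q0 then c (p mod M) else 0) * h p)
     = (\<Sum>q<d. \<Sum>r<M. (if (q*M+r) div M = q0 then c ((q*M+r) mod M) else 0) * h (q*M+r))"
    by (rule sum_blocks)
  also have "\<dots> = (\<Sum>q<d. if q = q0 then (\<Sum>r<M. c r * h (q0*M + r)) else 0)"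
  proof (rule sum.cong[OF refl])
    fix q
    have "\<And>r. r < M \<Longrightarrow> (q*M+r) div M = q \<and> (q*M+r) mod M = r" using assms(2) by simp
    then show "(\<Sum>r<M. (if (q*M+r) div M = q0 then c ((q*M+r) mod M) else 0) * h (q*M+r))
       = (if q = q0 then (\<Sum>r<M. c r * h (q0*M + r)) else 0)"
      by (auto intro!: sum.cong)
  qed
  also have "\<dots> = (\<Sum>r<M. c r * h (q0*M + r))" using assms(1) by simp
  finally show ?thesis .
qed

lemma cnt:
  assumes "0 \<le> D" "D < int m"
  shows "(\<Sum>k<m. if 1 \<le> k \<and> int k \<le> D then 1 else 0 :: real) = of_int D"
proof -
  have "(\<Sum>k<m. if 1 \<le> k \<and> int k \<le> D then 1 else 0 :: real) = (\<Sum>k\<in>{1..nat D}. 1)"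
    by (rule sum.mono_neutral_cong_right) (use assms in auto)
  also have "\<dots> = real (nat D)" by simp
  also have "\<dots> = of_int D" using assms(1) by simp
  finally show ?thesis .
qed




locale net =
  fixes b l s :: nat and eps :: real
  assumes b2: "b \<ge> 2" and epos: "0 < eps"
begin

definition Pn :: "nat \<Rightarrow> nat" where "Pn t = b ^ min l (s*t)"
definition Qn :: "nat \<Rightarrow> nat" where "Qn t = b ^ (l - min l (s*t))"
definition mn :: "nat \<Rightarrow> nat" where "mn t = b ^ (min l (s*t) - min l (s*(t-1)))"

definition good :: "real \<Rightarrow> bool" where
  "good y \<longleftrightarrow> 0 \<le> y \<and> y < 1 \<and> (\<forall>j::int. 0 \<le> j \<longrightarrow> j < int (b^l) \<longrightarrow>
      of_int j / real (b^l) \<le> y \<or> y \<le> of_int j / real (b^l) - eps)"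

definition alpha :: "nat \<Rightarrow> nat \<Rightarrow> real" where
  "alpha t r = (if r = 0 then 1 else if r = 1 then 0 else real (Pn t))"
definition beta :: "nat \<Rightarrow> nat \<Rightarrow> real" where
  "beta t r = (if r = 0 then 0 else if r = 1 then 1 else - real (mn t))"
definition gamma :: "nat \<Rightarrow> nat \<Rightarrow> real" where
  "gamma t r = (if r \<le> 1 then 0 else - real (r div 2) + (if even r then eps * real (Pn t) else 0))"
definition sem :: "nat \<Rightarrow> real \<Rightarrow> nat \<Rightarrow> real" where
  "sem t y r = relu (alpha t r * y + beta t r * of_int \<lfloor>real (Pn (t-1)) * y\<rfloor> + gamma t r)"
definition fco :: "nat \<Rightarrow> nat \<Rightarrow> real" where
  "fco t r = (if r = 1 then real (mn t) else if 2 \<le> r \<and> r div 2 < mn t then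
      (if even r then 1 / (eps * real (Pn t)) else - 1 / (eps * real (Pn t))) else 0)"

lemma Pn_pos: "0 < Pn t" using b2 by (simp add: Pn_def)

lemma Pn_step: "1 \<le> t \<Longrightarrow> Pn t = mn t * Pn (t-1)"
proof -
  assume t: "1 \<le> t"
  have "min l (s*(t-1)) \<le> min l (s*t)" by (simp add: min.coboundedI1 min_le_iff_disj)
  then show ?thesis unfolding Pn_def mn_def by (simp add: power_add[symmetric])
qed

lemma PQ: "Pn t * Qn t = b ^ l"
  unfolding Pn_def Qn_def by (simp add: power_add[symmetric])

lemma mn_le: "1 \<le> t \<Longrightarrow> mn t \<le> b ^ s"
proof -
  assume t: "1 \<le> t"
  have "s*t = s*(t-1) + s" using t by (cases t) auto
  then have "min l (s*t) - min l (s*(t-1)) \<le> s" by simp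
  then show ?thesis unfolding mn_def using b2 by (intro power_increasing) auto
qed

lemma Pn0: "Pn 0 = 1" by (simp add: Pn_def)

lemma ramp_dich:
  assumes g: "good y" and t: "1 \<le> t" and k: "k < mn t"
  defines "F \<equiv> \<lfloor>real (Pn (t-1)) * y\<rfloor>"
  shows "real (Pn t) * y - real (mn t) * of_int F - real k \<ge> 0 \<or>
         real (Pn t) * y - real (mn t) * of_int F - real k \<le> - eps * real (Pn t)"
proof -
  have y0: "0 \<le> y" and y1: "y < 1" using g by (auto simp: good_def)
  have F0: "0 \<le> F" unfolding F_def using y0 by simp
  have "real (Pn (t-1)) * y < real (Pn (t-1))" using y1 Pn_pos[of "t-1"] by simp
  then have F1: "F + 1 \<le> int (Pn (t-1))" unfolding F_def by linarith
  define j where "j = int (mn t) * F + int k"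
  have j0: "0 \<le> j" unfolding j_def using F0 by simp
  have "j \<le> int (mn t) * F + int (mn t) - 1" unfolding j_def using k by simp
  also have "\<dots> = int (mn t) * (F + 1) - 1" by (simp add: algebra_simps)
  also have "\<dots> \<le> int (mn t) * int (Pn (t-1)) - 1"
  proof -
    have "int (mn t) * (F+1) \<le> int (mn t) * int (Pn (t-1))" by (rule mult_left_mono[OF F1]) simp
    then show ?thesis by linarith
  qed
  also have "\<dots> = int (Pn t) - 1" using Pn_step[OF t] by simp
  finally have jP: "j \<le> int (Pn t) - 1" .
  define J where "J = j * int (Qn t)"
  have J0: "0 \<le> J" unfolding J_def using j0 by simp
  have "J \<le> (int (Pn t) - 1) * int (Qn t)" unfolding J_def using jP by (simp add: mult_right_mono)
  also have "\<dots> < int (b^l)"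
  proof -
    have "0 < Qn t" using b2 by (simp add: Qn_def)
    have "(int (Pn t) - 1) * int (Qn t) = int (Pn t * Qn t) - int (Qn t)" by (simp add: algebra_simps)
    then show ?thesis using PQ[of t] \<open>0 < Qn t\<close> by simp
  qed
  finally have Jn: "J < int (b^l)" .
  have JP: "of_int J / real (b^l) = of_int j / real (Pn t)"
  proof -
    have "real (b^l) = real (Pn t) * real (Qn t)" using PQ[of t] by (metis of_nat_mult)
    moreover have "0 < Qn t" using b2 by (simp add: Qn_def)
    ultimately show ?thesis unfolding J_def by (simp add: field_simps)
  qed
  have w: "real (Pn t) * y - real (mn t) * of_int F - real k = real (Pn t) * (y - of_int j / real (Pn t))"
    unfolding j_def using Pn_pos[of t] by (simp add: field_simps)
  from g J0 Jn have "of_int J / real (b^l) \<le> y \<or> y \<le> of_int J / real (b^l) - eps"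
    by (auto simp: good_def)
  then show ?thesis
  proof
    assume "of_int J / real (b^l) \<le> y"
    then show ?thesis unfolding w JP by simp
  next
    assume "y \<le> of_int J / real (b^l) - eps"
    then have "y - of_int j / real (Pn t) \<le> - eps" unfolding JP by simp
    then show ?thesis unfolding w using Pn_pos[of t]
      by (metis mult_left_mono mult_minus_right of_nat_0_le_iff mult.commute)
  qed
qed

end


context net begin

lemma sum_pairs: "(\<Sum>r<2*m. g r) = (\<Sum>k<m. g (2*k) + g (2*k+1))" for g :: "nat \<Rightarrow> real"
  by (induction m) (simp_all add: sum.distrib)

lemma key:
  assumes g: "good y" and t: "1 \<le> t" and mm: "mn t \<le> m"
  shows "(\<Sum>r<2*m. fco t r * sem t y r) = of_int \<lfloor>real (Pn t) * y\<rfloor>"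
proof -
  define F where "F = \<lfloor>real (Pn (t-1)) * y\<rfloor>"
  define G where "G = \<lfloor>real (Pn t) * y\<rfloor>"
  define D where "D = G - int (mn t) * F"
  have y0: "0 \<le> y" and y1: "y < 1" using g by (auto simp: good_def)
  have F0: "0 \<le> F" unfolding F_def using y0 by simp
  have PtF: "real (Pn t) * y = real (mn t) * (real (Pn (t-1)) * y)" using Pn_step[OF t] by simp
  have D0: "0 \<le> D"
  proof -
    have "of_int (int (mn t) * F) \<le> real (Pn t) * y"
      unfolding PtF F_def by (simp add: mult_left_mono)
    then have "int (mn t) * F \<le> G" unfolding G_def by (simp add: le_floor_iff)
    then show ?thesis unfolding D_def by simp
  qed
  have D1: "D < int (mn t)"
  proof -
    have "real (Pn (t-1)) * y < of_int F + 1" unfolding F_def by linarith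
    then have "real (Pn t) * y < real (mn t) * (of_int F + 1)"
      unfolding PtF using b2 by (simp add: mn_def)
    then have "G < int (mn t) * (F + 1)" unfolding G_def by (simp add: floor_less_iff)
    then show ?thesis unfolding D_def by (simp add: algebra_simps)
  qed
  have delta: "0 < eps * real (Pn t)" using epos Pn_pos[of t] by simp
  have pair: "fco t (2*k) * sem t y (2*k) + fco t (2*k+1) * sem t y (2*k+1) =
     (if k = 0 then real (mn t) * of_int F else if 1 \<le> k \<and> int k \<le> D then 1 else 0)"
    if km: "k < m" for k
  proof (cases "k = 0")
    case True
    then show ?thesis using F0 unfolding fco_def sem_def alpha_def beta_def gamma_def F_def relu_def
      by simp
  next
    case False
    show ?thesis
    proof (cases "k < mn t")
      case True
      define w where "w = real (Pn t) * y - real (mn t) * of_int F - real k"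
      have dich: "w \<ge> 0 \<or> w \<le> - eps * real (Pn t)"
        unfolding w_def F_def by (rule ramp_dich[OF g t True])
      have s0: "sem t y (2*k) = relu (w + eps * real (Pn t))"
        unfolding sem_def alpha_def beta_def gamma_def w_def F_def using False by (simp add: algebra_simps)
      have s1: "sem t y (2*k+1) = relu w"
        unfolding sem_def alpha_def beta_def gamma_def w_def F_def using False by simp
      have f0: "fco t (2*k) = 1 / (eps * real (Pn t))" unfolding fco_def using False True by simp
      have f1: "fco t (2*k+1) = - 1 / (eps * real (Pn t))" unfolding fco_def using False True by simp
      have wD: "w \<ge> 0 \<longleftrightarrow> int k \<le> D"
      proof -
        have "w \<ge> 0 \<longleftrightarrow> of_int (int (mn t) * F + int k) \<le> real (Pn t) * y"
          unfolding w_def by (simp, linarith)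
        also have "\<dots> \<longleftrightarrow> int (mn t) * F + int k \<le> G" unfolding G_def by (simp add: le_floor_iff)
        also have "\<dots> \<longleftrightarrow> int k \<le> D" unfolding D_def by linarith
        finally show ?thesis .
      qed
      show ?thesis
      proof (cases "w \<ge> 0")
        case True
        then show ?thesis using wD delta False unfolding s0 s1 f0 f1 relu_def
          by (simp add: add_divide_distrib diff_divide_distrib[symmetric] Pn_pos epos[THEN less_imp_neq, symmetric])
      next
        case nw: False
        then have "w \<le> - eps * real (Pn t)" using dich by simp
        then show ?thesis using wD nw delta False unfolding s0 s1 f0 f1 relu_def
          by simp
      qed
    next
      case nk: False
      then have "\<not> int k \<le> D" using D1 by simp
      then show ?thesis using False nk unfolding fco_def by simp
    qed
  qed
  have "(\<Sum>r<2*m. fco t r * sem t y r) = (\<Sum>k<m. if k = 0 then real (mn t) * of_int F else if 1 \<le> k \<and> int k \<le> D then 1 else 0)"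
    unfolding sum_pairs by (rule sum.cong[OF refl], rule pair) simp
  also have "\<dots> = real (mn t) * of_int F + (\<Sum>k<m. if 1 \<le> k \<and> int k \<le> D then 1 else 0)"
  proof -
    have m0: "0 < m" using mm b2 by (metis mn_def not_gr_zero le_zero_eq power_eq_0_iff numeral_le_iff zero_less_numeral less_le_trans zero_less_two)
    have "(\<Sum>k<m. if k = 0 then real (mn t) * of_int F else if 1 \<le> k \<and> int k \<le> D then 1 else 0)
       = (\<Sum>k<m. (if k = 0 then real (mn t) * of_int F else 0) + (if 1 \<le> k \<and> int k \<le> D then 1 else 0))"
      by (rule sum.cong) auto
    also have "\<dots> = real (mn t) * of_int F + (\<Sum>k<m. if 1 \<le> k \<and> int k \<le> D then 1 else 0)"
      using m0 by (simp add: sum.distrib)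
    finally show ?thesis .
  qed
  also have "\<dots> = real (mn t) * of_int F + of_int D"
    using cnt[OF D0] D1 mm by simp
  also have "\<dots> = of_int G" unfolding D_def by simp
  finally show ?thesis unfolding G_def .
qed

end


context net begin

lemma omega_good:
  assumes i: "i \<in> index_set b d l" and x: "x \<in> Omega b d l i eps" and q: "q < d"
  shows "good (x q) \<and> \<lfloor>real (b^l) * x q\<rfloor> = int (i q)"
proof -
  define n where "n = b^l"
  have n1: "1 \<le> n" unfolding n_def using b2 by simp
  have K: "i q < n" using i q unfolding index_set_def n_def by auto
  have xm: "x q \<in> (if i q < n - 1 then {real (i q) / real n ..< real (i q + 1) / real n - eps}
      else {1 - 1 / real n ..< 1})" using x q unfolding Omega_def n_def by auto
  have nr: "real b ^ l = real n" unfolding n_def by simp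
  have npos: "0 < real n" using n1 by simp
  show ?thesis
  proof (cases "i q < n - 1")
    case True
    then have a: "real (i q) / real n \<le> x q" and c: "x q < real (i q + 1) / real n - eps" using xm by auto
    have "real (i q + 1) \<le> real n" using K by linarith
    then have "real (i q + 1) / real n \<le> 1" using npos by simp
    then have y1: "x q < 1" using c epos by linarith
    have y0: "0 \<le> x q" using a npos by (smt (verit) divide_nonneg_nonneg of_nat_0_le_iff)
    have gd: "\<forall>j::int. 0 \<le> j \<longrightarrow> j < int n \<longrightarrow> of_int j / real n \<le> x q \<or> x q \<le> of_int j / real n - eps"
    proof (intro allI impI)
      fix j :: int assume "0 \<le> j" "j < int n"
      show "of_int j / real n \<le> x q \<or> x q \<le> of_int j / real n - eps"
      proof (cases "j \<le> int (i q)")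
        case True
        then have "of_int j / real n \<le> real (i q) / real n" using npos by (simp add: divide_right_mono)
        then show ?thesis using a by simp
      next
        case False
        then have "real (i q + 1) \<le> of_int j" by simp
        then have "real (i q + 1) / real n \<le> of_int j / real n" using npos by (simp add: divide_right_mono)
        then show ?thesis using c by simp
      qed
    qed
    have "real (i q) \<le> real n * x q" using a npos by (simp add: field_simps)
    moreover have "real n * x q < real (i q) + 1"
    proof -
      have "0 < eps * real n" using epos npos by simp
      moreover have "real n * x q < real n * (real (i q + 1) / real n - eps)" using c npos by simp
      moreover have "real n * (real (i q + 1) / real n - eps) = real (i q) + 1 - eps * real n"
        using npos by (simp add: field_simps)
      ultimately show ?thesis by linarith
    qed
    ultimately have "\<lfloor>real n * x q\<rfloor> = int (i q)" by (simp add: floor_eq_iff)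
    then show ?thesis using y0 y1 gd unfolding good_def n_def by simp
  next
    case False
    then have iq: "i q = n - 1" using K by simp
    then have a: "1 - 1 / real n \<le> x q" and c: "x q < 1" using xm False by auto
    have "1 / real n \<le> 1" using n1 by simp
    then have y0: "0 \<le> x q" using a by linarith
    have gd: "\<forall>j::int. 0 \<le> j \<longrightarrow> j < int n \<longrightarrow> of_int j / real n \<le> x q \<or> x q \<le> of_int j / real n - eps"
    proof (intro allI impI)
      fix j :: int assume "0 \<le> j" "j < int n"
      then have "of_int j \<le> real n - 1" by linarith
      then have "of_int j / real n \<le> (real n - 1) / real n" using npos by (simp add: divide_right_mono)
      also have "\<dots> = 1 - 1 / real n" using npos by (simp add: field_simps)
      finally show "of_int j / real n \<le> x q \<or> x q \<le> of_int j / real n - eps" using a by simp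
    qed
    have "real n - 1 \<le> real n * x q" using a npos by (simp add: field_simps)
    moreover have "real n * x q < real n - 1 + 1" using c npos by simp
    moreover have "real (i q) = real n - 1" using iq n1 by simp
    ultimately have "\<lfloor>real n * x q\<rfloor> = int (i q)" by (simp add: floor_eq_iff)
    then show ?thesis using y0 c gd unfolding good_def n_def by simp
  qed
qed

end


context net begin

definition MM where "MM = 2 * b^s"
definition Nw :: "nat \<Rightarrow> nat \<Rightarrow> nat \<Rightarrow> nat" where
  "Nw d L k = (if k = 0 then d else if k \<le> L then d*MM else 1)"
definition Aw :: "nat \<Rightarrow> nat \<Rightarrow> nat \<Rightarrow> nat \<Rightarrow> real" where
  "Aw L k i p = (if k = 0 then (if p = i div MM then alpha 1 (i mod MM) else 0)
     else if k < L then (if p div MM = i div MM then alpha (k+1) (i mod MM) * (if p mod MM = 0 then 1 else 0)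
         + beta (k+1) (i mod MM) * fco k (p mod MM) else 0)
     else real b ^ (l * (p div MM)) * fco L (p mod MM))"
definition bw :: "nat \<Rightarrow> nat \<Rightarrow> nat \<Rightarrow> real" where
  "bw L k i = (if k < L then gamma (k+1) (i mod MM) else 0)"

lemma MM_pos: "0 < MM" using b2 by (simp add: MM_def)

lemma sem0: "good y \<Longrightarrow> sem t y 0 = y"
  by (simp add: sem_def alpha_def beta_def gamma_def relu_def good_def)

lemma inv:
  assumes gx: "\<forall>q<d. good (x q)"
  shows "1 \<le> t \<Longrightarrow> t \<le> L \<Longrightarrow> q < d \<Longrightarrow> r < MM \<Longrightarrow>
     nn_hidden (Nw d L) (Aw L) (bw L) t x (q*MM+r) = sem t (x q) r"
proof (induction t arbitrary: q r)
  case 0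
  then show ?case by simp
next
  case (Suc t)
  define i where "i = q*MM+r"
  have idiv: "i div MM = q" and imod: "i mod MM = r" unfolding i_def using Suc.prems(4) by auto
  have gq: "good (x q)" using gx Suc.prems(3) by simp
  show ?case
  proof (cases "t = 0")
    case True
    have "(\<Sum>j<d. Aw L 0 i j * x j) = (\<Sum>j<d. (if j = q then alpha 1 r * x q else 0))"
      unfolding Aw_def idiv imod by (rule sum.cong) auto
    also have "\<dots> = alpha 1 r * x q" using Suc.prems(3) by simp
    finally have S: "(\<Sum>j<d. Aw L 0 i j * x j) = alpha 1 r * x q" .
    have fl: "\<lfloor>real (Pn 0) * x q\<rfloor> = 0" using gq by (simp add: Pn0 good_def floor_eq_iff)
    show ?thesis using True Suc.prems S fl unfolding i_def[symmetric]
      by (simp add: Nw_def bw_def imod sem_def add.commute)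
  next
    case False
    then have t1: "1 \<le> t" and tL: "t < L" using Suc.prems by auto
    define c where "c r' = alpha (t+1) r * (if r' = 0 then 1 else 0) + beta (t+1) r * fco t r'" for r'
    have A: "Aw L t i p = (if p div MM = q then c (p mod MM) else 0)" for p
      unfolding Aw_def c_def idiv imod using t1 tL by simp
    let ?h = "nn_hidden (Nw d L) (Aw L) (bw L) t x"
    have "(\<Sum>p<Nw d L t. Aw L t i p * ?h p) = (\<Sum>p<d*MM. (if p div MM = q then c (p mod MM) else 0) * ?h p)"
      unfolding A using t1 tL by (simp add: Nw_def)
    also have "\<dots> = (\<Sum>r'<MM. c r' * ?h (q*MM + r'))"
      by (rule sum_block_sel[OF Suc.prems(3) MM_pos])
    also have "\<dots> = (\<Sum>r'<MM. c r' * sem t (x q) r')"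
      using Suc.IH[OF t1 _ Suc.prems(3)] tL by (intro sum.cong) auto
    also have "\<dots> = (\<Sum>r'<MM. alpha (t+1) r * (if r' = 0 then sem t (x q) r' else 0)
        + beta (t+1) r * (fco t r' * sem t (x q) r'))"
      unfolding c_def by (rule sum.cong) (auto simp: algebra_simps)
    also have "\<dots> = alpha (t+1) r * sem t (x q) 0 + beta (t+1) r * (\<Sum>r'<MM. fco t r' * sem t (x q) r')"
      using MM_pos by (simp add: sum.distrib sum_distrib_left[symmetric])
    also have "\<dots> = alpha (t+1) r * x q + beta (t+1) r * of_int \<lfloor>real (Pn t) * x q\<rfloor>"
      using sem0[OF gq] key[OF gq t1 mn_le[OF t1]] unfolding MM_def by simp
    finally have S: "(\<Sum>p<Nw d L t. Aw L t i p * ?h p) = \<dots>" .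
    have "nn_hidden (Nw d L) (Aw L) (bw L) (Suc t) x i = relu (bw L t i + (\<Sum>p<Nw d L t. Aw L t i p * ?h p))"
      by simp
    also have "\<dots> = relu (bw L t i + (alpha (t+1) r * x q + beta (t+1) r * of_int \<lfloor>real (Pn t) * x q\<rfloor>))"
      by (simp only: S)
    also have "\<dots> = sem (Suc t) (x q) r"
      using tL by (simp add: bw_def imod sem_def algebra_simps)
    finally show ?thesis unfolding i_def .
  qed
qed

lemma out_eq:
  assumes gx: "\<forall>q<d. good (x q)" and L1: "1 \<le> L" and lsL: "l \<le> s * L"
  shows "nn_eval (Nw d L) (Aw L) (bw L) L x 0 = (\<Sum>q<d. real b ^ (l*q) * of_int \<lfloor>real (b^l) * x q\<rfloor>)"
proof -
  let ?h = "nn_hidden (Nw d L) (Aw L) (bw L) L x"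
  have PL: "Pn L = b^l" unfolding Pn_def using lsL by simp
  have "nn_eval (Nw d L) (Aw L) (bw L) L x 0 = (\<Sum>p<d*MM. real b ^ (l * (p div MM)) * fco L (p mod MM) * ?h p)"
    unfolding nn_eval_def using L1 by (simp add: Nw_def bw_def Aw_def)
  also have "\<dots> = (\<Sum>q<d. \<Sum>r<MM. real b ^ (l * ((q*MM+r) div MM)) * fco L ((q*MM+r) mod MM) * ?h (q*MM+r))"
    by (rule sum_blocks)
  also have "\<dots> = (\<Sum>q<d. real b ^ (l*q) * (\<Sum>r<MM. fco L r * sem L (x q) r))"
    using inv[OF gx L1 order.refl] by (intro sum.cong refl) (simp add: sum_distrib_left mult.assoc)
  also have "\<dots> = (\<Sum>q<d. real b ^ (l*q) * of_int \<lfloor>real (b^l) * x q\<rfloor>)"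
    using key[OF _ L1 mn_le[OF L1]] gx PL unfolding MM_def by (intro sum.cong refl) simp
  finally show ?thesis .
qed

end


theorem mainTheorem6:
  fixes b d l L :: nat and eps :: real
  assumes "b \<ge> 2" and "d \<ge> 1" and "0 < eps" and "eps < 1 / real b ^ l" and "L \<ge> 1"
  shows "\<exists>q. is_NN d 1 (2 * d * b ^ nat \<lceil>real l / real L\<rceil>) L q \<and>
           (\<forall>i\<in>index_set b d l. \<forall>x\<in>Omega b d l i eps. q x 0 = ind b d l i)"
proof -
  define s where "s = nat \<lceil>real l / real L\<rceil>"
  interpret net b l s eps using assms by unfold_locales auto
  have lsL: "l \<le> s * L"
  proof -
    have Lp: "0 < real L" using assms(5) by simp
    have "real l / real L \<le> of_int \<lceil>real l / real L\<rceil>" by (rule le_of_int_ceiling)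
    also have "\<dots> = real s"
    proof -
      have "0 \<le> real l / real L" by simp
      then have "-1 < real l / real L" by linarith
      then have "0 \<le> \<lceil>real l / real L\<rceil>" by simp
      then show ?thesis unfolding s_def by simp
    qed
    finally have "real l \<le> real s * real L" using Lp by (simp add: divide_le_eq)
    then show ?thesis by (metis of_nat_le_iff of_nat_mult)
  qed
  have NN: "is_NN d 1 (2 * d * b ^ s) L (nn_eval (Nw d L) (Aw L) (bw L) L)"
    unfolding is_NN_def
    by (rule exI[of _ "Nw d L"], rule exI[of _ "Aw L"], rule exI[of _ "bw L"])
       (auto simp: Nw_def MM_def)
  show ?thesis unfolding s_def[symmetric]
  proof (intro exI conjI ballI)
    show "is_NN d 1 (2 * d * b ^ s) L (nn_eval (Nw d L) (Aw L) (bw L) L)" by (rule NN)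
  next
    fix i x assume i: "i \<in> index_set b d l" and x: "x \<in> Omega b d l i eps"
    have gx: "\<forall>q<d. good (x q)" using omega_good[OF i x] by blast
    have fl: "\<And>q. q < d \<Longrightarrow> \<lfloor>real (b^l) * x q\<rfloor> = int (i q)" using omega_good[OF i x] by blast
    have "nn_eval (Nw d L) (Aw L) (bw L) L x 0 = (\<Sum>q<d. real b ^ (l*q) * of_int \<lfloor>real (b^l) * x q\<rfloor>)"
      by (rule out_eq[OF gx assms(5) lsL])
    also have "\<dots> = ind b d l i" unfolding ind_def using fl by (intro sum.cong refl) simp
    finally show "nn_eval (Nw d L) (Aw L) (bw L) L x 0 = ind b d l i" .
  qed
qed

end
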